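(* Let $n\ge1$ and let $\mathcal{M}\subseteq\mathbb{C}^{2^n}$ be a subspace of dimension greater than one. Then there are two orthonormal vectors $\phi,\psi\in\mathcal{M}$ such that $\sum_{x\in\{0,1\}^n}|\phi(x)|\cdot|\psi(x)|\ge\frac12$.
   Context: Vectors in $\mathbb{C}^{2^n}$ are written $\phi=\sum_{x\in\{0,1\}^n}\phi(x)|x\rangle$ in the standard basis. *)

theory Defs
  imports "HOL-Analysis.Analysis"
begin

text \<open>Vectors of C^(2^n) are indexed by x in {0,1}^n, modelled as the finite type bool ^ 'n
  (n = CARD('n) >= 1). Subspaces and dimension are complex-linear ones (scalar action (*s)).\<close>

definition cinner :: "complex ^ 'i \<Rightarrow> complex ^ 'i \<Rightarrow> complex" where
  "cinner u v = (\<Sum>x\<in>UNIV. cnj (u $ x) * v $ x)"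

definition orthonormal_pair :: "complex ^ 'i \<Rightarrow> complex ^ 'i \<Rightarrow> bool" where
  "orthonormal_pair u v \<longleftrightarrow> cinner u u = 1 \<and> cinner v v = 1 \<and> cinner u v = 0"

end

theory Submission
  imports Defs
begin

lemma cinner_add_left: "cinner (a + b) c = cinner a c + cinner b c"
  by (simp add: cinner_def distrib_right sum.distrib)
lemma cinner_add_right: "cinner c (a + b) = cinner c a + cinner c b"
  by (simp add: cinner_def distrib_left sum.distrib)
lemma cinner_diff_left: "cinner (a - b) c = cinner a c - cinner b c"
  by (simp add: cinner_def left_diff_distrib sum_subtractf)
lemma cinner_diff_right: "cinner c (a - b) = cinner c a - cinner c b"
  by (simp add: cinner_def right_diff_distrib sum_subtractf)
lemma cinner_scale_left: "cinner (r *s a) c = cnj r * cinner a c"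
  by (simp add: cinner_def sum_distrib_left mult.assoc)
lemma cinner_scale_right: "cinner c (r *s a) = r * cinner c a"
  by (simp add: cinner_def sum_distrib_left mult.left_commute)
lemma cinner_swap: "cinner a b = cnj (cinner b a)"
  by (simp add: cinner_def mult.commute)

lemma cinner_self: "cinner a a = complex_of_real (\<Sum>x\<in>UNIV. (norm (a $ x))^2)"
  unfolding cinner_def of_real_sum
  by (rule sum.cong[OF refl]) (metis complex_norm_square mult.commute)

lemma cinner_self_pos:
  assumes "a \<noteq> 0" shows "(\<Sum>x\<in>UNIV. (norm (a $ x))^2) > 0"
proof -
  from assms obtain y where "a $ y \<noteq> 0" by (metis vec_eq_iff zero_index)
  hence "0 < (norm (a $ y))^2" by simp
  also have "\<dots> \<le> (\<Sum>x\<in>UNIV. (norm (a $ x))^2)"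
    by (rule member_le_sum) auto
  finally show ?thesis .
qed

lemma normalize:
  fixes a :: "complex ^ 'i"
  assumes "a \<noteq> 0"
  defines "r \<equiv> complex_of_real (1 / sqrt (\<Sum>x\<in>UNIV. (norm (a $ x))^2))"
  shows "cinner (r *s a) (r *s a) = 1" "cnj r = r"
proof -
  let ?s = "\<Sum>x\<in>UNIV. (norm (a $ x))^2"
  have p: "?s > 0" using cinner_self_pos[OF assms(1)] .
  have "cinner (r *s a) (r *s a) = cnj r * r * cinner a a"
    by (simp add: cinner_scale_left cinner_scale_right)
  also have "\<dots> = cnj r * r * complex_of_real ?s"
    by (simp only: cinner_self[of a])
  also have "\<dots> = complex_of_real ((1 / sqrt ?s) * (1 / sqrt ?s) * ?s)"
    by (simp only: r_def complex_cnj_complex_of_real of_real_mult)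
  also have "(1 / sqrt ?s) * (1 / sqrt ?s) * ?s = 1" using p
    by (simp add: field_simps)
  finally show "cinner (r *s a) (r *s a) = 1" by simp
  show "cnj r = r" by (simp add: r_def)
qed

lemma pointwise:
  fixes u v :: complex
  shows "norm u ^ 2 + norm v ^ 2 \<le> norm (u * u - v * v) + norm (u * u + v * v)"
proof -
  have 1: "norm (2 * (u * u)) \<le> norm (u * u - v * v) + norm (u * u + v * v)"
    using norm_triangle_ineq[of "u * u - v * v" "u * u + v * v"] by (simp add: algebra_simps)
  have 2: "norm (2 * (v * v)) \<le> norm (u * u - v * v) + norm (u * u + v * v)"
    using norm_triangle_ineq[of "u * u + v * v" "v * v - u * u"] norm_minus_commute[of "u * u" "v * v"]
    by (simp add: algebra_simps)
  have "norm (2 * (u * u)) = 2 * norm u ^ 2" "norm (2 * (v * v)) = 2 * norm v ^ 2"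
    by (simp_all add: norm_mult power2_eq_square)
  with 1 2 show ?thesis by linarith
qed

lemma main2:
  fixes u v :: "complex ^ 'i"
  assumes ou: "cinner u u = 1" and ov: "cinner v v = 1" and uv: "cinner u v = 0"
  shows "\<exists>e \<in> {1, \<i>}. orthonormal_pair ((1/sqrt 2) *s (u + e *s v)) ((1/sqrt 2) *s (u - e *s v))
     \<and> (\<Sum>x\<in>UNIV. norm (((1/sqrt 2) *s (u + e *s v)) $ x) * norm (((1/sqrt 2) *s (u - e *s v)) $ x)) \<ge> 1/2"
proof -
  have vu: "cinner v u = 0" using uv cinner_swap[of v u] by simp
  have orth: "orthonormal_pair ((1/sqrt 2) *s (u + e *s v)) ((1/sqrt 2) *s (u - e *s v))"
    if "cnj e * e = 1" for e :: complex
  proof -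
    have h: "cnj (complex_of_real (1 / sqrt 2)) * complex_of_real (1 / sqrt 2) = 1/2"
      by (simp flip: of_real_mult)
    have s2: "complex_of_real (sqrt 2) * complex_of_real (sqrt 2) = 2" by (simp flip: of_real_mult)
    show ?thesis using that unfolding orthonormal_pair_def
      by (simp add: cinner_scale_left cinner_scale_right cinner_add_left cinner_add_right
          cinner_diff_left cinner_diff_right ou ov uv vu mult.assoc[symmetric] h s2 algebra_simps)
  qed
  define S where "S e = (\<Sum>x\<in>UNIV. norm (((1/sqrt 2) *s (u + e *s v)) $ x) * norm (((1/sqrt 2) *s (u - e *s v)) $ x))" for e
  have S1: "S 1 = (\<Sum>x\<in>UNIV. norm (u$x * u$x - v$x * v$x)) / 2"
    unfolding S_def sum_divide_distrib
  proof (rule sum.cong[OF refl])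
    fix x
    have "norm ((complex_of_real (1/sqrt 2)) * (u$x + v$x)) * norm ((complex_of_real (1/sqrt 2)) * (u$x - v$x))
       = (1/sqrt 2) * (1/sqrt 2) * norm ((u$x + v$x) * (u$x - v$x))"
      by (simp add: norm_mult norm_divide)
    also have "(1/sqrt 2) * (1/sqrt 2) = (1/2::real)" by (simp add: power_divide flip: power2_eq_square)
    also have "(u$x + v$x) * (u$x - v$x) = u$x * u$x - v$x * v$x" by (simp add: algebra_simps)
    moreover have "((complex_of_real (1/sqrt 2)) *s (u + 1 *s v)) $ x = (complex_of_real (1/sqrt 2)) * (u$x + v$x)"
       "((complex_of_real (1/sqrt 2)) *s (u - 1 *s v)) $ x = (complex_of_real (1/sqrt 2)) * (u$x - v$x)" by (simp_all add: algebra_simps add_divide_distrib diff_divide_distrib)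
    ultimately show "norm (((complex_of_real (1/sqrt 2)) *s (u + 1 *s v)) $ x) * norm (((complex_of_real (1/sqrt 2)) *s (u - 1 *s v)) $ x) = norm (u$x * u$x - v$x * v$x) / 2"
      by (simp only:)
  qed
  have S2: "S \<i> = (\<Sum>x\<in>UNIV. norm (u$x * u$x + v$x * v$x)) / 2"
    unfolding S_def sum_divide_distrib
  proof (rule sum.cong[OF refl])
    fix x
    have "norm ((complex_of_real (1/sqrt 2)) * (u$x + \<i>* v$x)) * norm ((complex_of_real (1/sqrt 2)) * (u$x - \<i>* v$x))
       = (1/sqrt 2) * (1/sqrt 2) * norm ((u$x + \<i>* v$x) * (u$x - \<i>* v$x))"
      by (simp add: norm_mult norm_divide)
    also have "(1/sqrt 2) * (1/sqrt 2) = (1/2::real)" by (simp add: power_divide flip: power2_eq_square)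
    also have "(u$x + \<i>* v$x) * (u$x - \<i>* v$x) = u$x * u$x + v$x * v$x" by (simp add: algebra_simps)
    moreover have "((complex_of_real (1/sqrt 2)) *s (u + \<i> *s v)) $ x = (complex_of_real (1/sqrt 2)) * (u$x + \<i> * v$x)"
       "((complex_of_real (1/sqrt 2)) *s (u - \<i> *s v)) $ x = (complex_of_real (1/sqrt 2)) * (u$x - \<i> * v$x)" by (simp_all add: algebra_simps add_divide_distrib diff_divide_distrib)
    ultimately show "norm (((complex_of_real (1/sqrt 2)) *s (u + \<i> *s v)) $ x) * norm (((complex_of_real (1/sqrt 2)) *s (u - \<i> *s v)) $ x) = norm (u$x * u$x + v$x * v$x) / 2"
      by (simp only:)
  qed
  have nu: "(\<Sum>x\<in>UNIV. (norm (u $ x))^2) = 1" using ou cinner_self[of u] by (metis of_real_eq_1_iff)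
  have nv: "(\<Sum>x\<in>UNIV. (norm (v $ x))^2) = 1" using ov cinner_self[of v] by (metis of_real_eq_1_iff)
  have "2 \<le> (\<Sum>x\<in>UNIV. norm (u$x * u$x - v$x * v$x) + norm (u$x * u$x + v$x * v$x))"
  proof -
    have "(\<Sum>x\<in>UNIV. (norm (u $ x))^2 + (norm (v $ x))^2) \<le> (\<Sum>x\<in>UNIV. norm (u$x * u$x - v$x * v$x) + norm (u$x * u$x + v$x * v$x))"
      by (rule sum_mono) (rule pointwise)
    thus ?thesis using nu nv by (simp add: sum.distrib)
  qed
  hence "S 1 + S \<i> \<ge> 1" unfolding S1 S2 by (simp add: sum.distrib)
  hence "S 1 \<ge> 1/2 \<or> S \<i> \<ge> 1/2" by linarith
  moreover have "orthonormal_pair ((1/sqrt 2) *s (u + 1 *s v)) ((1/sqrt 2) *s (u - 1 *s v))"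
    by (rule orth) simp
  moreover have "orthonormal_pair ((1/sqrt 2) *s (u + \<i> *s v)) ((1/sqrt 2) *s (u - \<i> *s v))"
    by (rule orth) simp
  ultimately show ?thesis unfolding S_def by auto
qed

theorem lemma3:
  fixes M :: "(complex ^ (bool ^ 'n)) set"
  assumes "vec.subspace M"
    and "vec.dim M > 1"
  shows "\<exists>\<phi> \<psi>. \<phi> \<in> M \<and> \<psi> \<in> M \<and> orthonormal_pair \<phi> \<psi> \<and>
           (\<Sum>x\<in>UNIV. norm (\<phi> $ x) * norm (\<psi> $ x)) \<ge> 1/2"
proof -
  have sub: "vec.subspace M" by fact
  obtain a where aM: "a \<in> M" and a0: "a \<noteq> 0"
  proof (rule ccontr)
    assume "\<not> thesis"
    with that have "M \<subseteq> vec.span {}" by (auto simp: vec.span_empty)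
    hence "vec.dim M \<le> card ({} :: (complex ^ (bool ^ 'n)) set)"
      by (metis vec.dim_le_card finite.emptyI)
    hence "vec.dim M \<le> 0" by (simp only: card.empty)
    with assms(2) show False by linarith
  qed
  obtain b where bM: "b \<in> M" and bs: "b \<notin> vec.span {a}"
  proof (rule ccontr)
    assume "\<not> thesis"
    with that have "M \<subseteq> vec.span {a}" by auto
    hence "vec.dim M \<le> card {a}" using vec.dim_le_card by blast
    with assms(2) show False by simp
  qed
  define c where "c = cinner a b / cinner a a"
  define w where "w = b - c *s a"
  have aa: "cinner a a \<noteq> 0" using cinner_self_pos[OF a0] cinner_self[of a]
    by (metis of_real_eq_0_iff order_less_irrefl)
  have aw: "cinner a w = 0" unfolding w_def c_def using aa
    by (simp add: cinner_diff_right cinner_scale_right)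
  have w0: "w \<noteq> 0"
  proof
    assume "w = 0"
    hence "b = c *s a" unfolding w_def by simp
    hence "b \<in> vec.span {a}" by (simp add: vec.span_base vec.span_scale)
    with bs show False by simp
  qed
  have wM: "w \<in> M" unfolding w_def using sub aM bM by (simp add: vec.subspace_diff vec.subspace_scale)
  define ra where "ra = complex_of_real (1 / sqrt (\<Sum>x\<in>UNIV. (norm (a $ x))^2))"
  define rw where "rw = complex_of_real (1 / sqrt (\<Sum>x\<in>UNIV. (norm (w $ x))^2))"
  define u where "u = ra *s a"
  define v where "v = rw *s w"
  have ou: "cinner u u = 1" unfolding u_def ra_def by (rule normalize(1)[OF a0])
  have ov: "cinner v v = 1" unfolding v_def rw_def by (rule normalize(1)[OF w0])
  have uv: "cinner u v = 0" unfolding u_def v_def by (simp add: cinner_scale_left cinner_scale_right aw)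
  have uM: "u \<in> M" unfolding u_def using sub aM by (simp add: vec.subspace_scale)
  have vM: "v \<in> M" unfolding v_def using sub wM by (simp add: vec.subspace_scale)
  obtain e where e: "e \<in> {1, \<i>}" and
    P: "orthonormal_pair ((1/sqrt 2) *s (u + e *s v)) ((1/sqrt 2) *s (u - e *s v))
     \<and> (\<Sum>x\<in>UNIV. norm (((1/sqrt 2) *s (u + e *s v)) $ x) * norm (((1/sqrt 2) *s (u - e *s v)) $ x)) \<ge> 1/2"
    using main2[OF ou ov uv] by blast
  have "(1/sqrt 2) *s (u + e *s v) \<in> M" "(1/sqrt 2) *s (u - e *s v) \<in> M"
    using sub uM vM by (simp_all add: vec.subspace_scale vec.subspace_add vec.subspace_diff)
  with P show ?thesis by blast
qed

end
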